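(* Let $b$ be a slowly varying function satisfying $\lim_{t\to0^+}b(t)\in(0,\infty)$, and extend $b$ to all of $\mathbb{R}$ by putting $b(s)=\lim_{t\to0^+}b(t)$ for $s\in(-\infty,0]$. Then for every $t_0\in\mathbb{R}$ there is a constant $C>0$ such that for every $t_1\in[-t_0,t_0]$ the function $b_{t_1}(t)=b(t-t_1)$, $t\in(0,\infty)$, satisfies \[C^{-1}\le\frac{b_{t_1}(t)}{b(t)}\le C\quad\text{for every }t\in(0,\infty).\] In particular, $b_{t_1}$ is a slowly varying function for every choice of $t_1\in\mathbb{R}$.
   Context: A measurable function $b:(0,\infty)\to(0,\infty)$ is called slowly varying if for every $\varepsilon>0$ there exist a non-decreasing function $b_\varepsilon$ and a non-increasing function $b_{-\varepsilon}$ on $(0,\infty)$ such that $t^{\varepsilon}b(t)\approx b_\varepsilon(t)$ and $t^{-\varepsilon}b(t)\approx b_{-\varepsilon}(t)$ on $(0,\infty)$, where $f\approx g$ means $C^{-1}g\le f\le Cg$ for some constant $C\ge1$ independent of the argument. Measurability is with respect to Lebesgue measure. *)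

theory Defs
  imports "HOL-Analysis.Analysis"
begin

definition approx_on :: "real set \<Rightarrow> (real \<Rightarrow> real) \<Rightarrow> (real \<Rightarrow> real) \<Rightarrow> bool" where
  "approx_on S f g \<longleftrightarrow> (\<exists>C\<ge>1. \<forall>t\<in>S. g t / C \<le> f t \<and> f t \<le> C * g t)"

definition slowly_varying :: "(real \<Rightarrow> real) \<Rightarrow> bool" where
  "slowly_varying b \<longleftrightarrow>
     b \<in> borel_measurable (restrict_space lebesgue {0<..}) \<and>
     (\<forall>t>0. b t > 0) \<and>
     (\<forall>\<epsilon>>0.
        (\<exists>bp. mono_on {0<..} bp \<and> approx_on {0<..} (\<lambda>t. t powr \<epsilon> * b t) bp) \<and>
        (\<exists>bm. antimono_on {0<..} bm \<and> approx_on {0<..} (\<lambda>t. t powr (-\<epsilon>) * b t) bm))"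

definition extend_left :: "(real \<Rightarrow> real) \<Rightarrow> real \<Rightarrow> real \<Rightarrow> real" where
  "extend_left b L s = (if 0 < s then b s else L)"

end

theory Submission
  imports Defs
begin

lemma transl_meas: "(\<lambda>x::real. x - a) \<in> lebesgue \<rightarrow>\<^sub>M lebesgue"
proof (rule measurableI)
  fix A :: "real set" assume "A \<in> sets lebesgue"
  hence "(\<lambda>x. a + x) ` A \<in> sets lebesgue" by (rule lebesgue_sets_translation)
  moreover have "(\<lambda>x. x - a) -` A \<inter> space lebesgue = (\<lambda>x. a + x) ` A"
    by (auto simp: image_iff) (metis add.commute diff_add_cancel)
  ultimately show "(\<lambda>x. x - a) -` A \<inter> space lebesgue \<in> sets lebesgue" by simp
qed auto

lemma sv_cmp:
  assumes "slowly_varying b"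
  shows "\<exists>K>0. \<forall>s>0. \<forall>t>0. b s \<le> K * max (s/t) (t/s) * b t"
proof -
  have pos: "\<And>t. t > 0 \<Longrightarrow> b t > 0" using assms unfolding slowly_varying_def by auto
  obtain bp Cp where bp: "mono_on {0<..} bp" "Cp \<ge> 1"
     "\<And>t. t > 0 \<Longrightarrow> bp t / Cp \<le> t powr 1 * b t \<and> t powr 1 * b t \<le> Cp * bp t"
    using assms unfolding slowly_varying_def approx_on_def
    by (metis greaterThan_iff zero_less_one)
  obtain bm Cm where bm: "antimono_on {0<..} bm" "Cm \<ge> 1"
     "\<And>t. t > 0 \<Longrightarrow> bm t / Cm \<le> t powr (-1) * b t \<and> t powr (-1) * b t \<le> Cm * bm t"
    using assms unfolding slowly_varying_def approx_on_def
    by (metis greaterThan_iff zero_less_one)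
  have A: "b s \<le> Cp^2 * (t/s) * b t" if "0 < s" "s \<le> t" for s t
  proof -
    have "s * b s \<le> Cp * bp s" using bp(3)[of s] that by simp
    also have "bp s \<le> bp t" using bp(1) that by (auto simp: mono_on_def)
    also have "bp t \<le> Cp * (t * b t)" using bp(3)[of t] that bp(2)
      by (simp add: divide_le_eq mult.commute)
    finally have "s * b s \<le> Cp * (Cp * (t * b t))" using bp(2) by simp
    thus ?thesis using that by (simp add: field_simps power2_eq_square)
  qed
  have B: "b t \<le> Cm^2 * (t/s) * b s" if "0 < s" "s \<le> t" for s t
  proof -
    have "b t / t \<le> Cm * bm t" using bm(3)[of t] that by (simp add: powr_minus divide_inverse mult.commute)
    also have "bm t \<le> bm s" using bm(1) that by (auto simp: monotone_on_def)
    also have "bm s \<le> Cm * (b s / s)"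
    proof -
      have "bm s / Cm \<le> b s / s" using bm(3)[of s] that
        by (simp add: powr_minus divide_inverse mult.commute)
      thus ?thesis using bm(2) by (simp add: divide_le_eq mult.commute)
    qed
    finally have "b t / t \<le> Cm * (Cm * (b s / s))" using bm(2) by simp
    thus ?thesis using that by (simp add: field_simps power2_eq_square)
  qed
  show ?thesis
  proof (intro exI[of _ "Cp^2 + Cm^2"] conjI allI impI)
    show "0 < Cp^2 + Cm^2" using bp(2) by (simp add: add_pos_nonneg)
    fix s t :: real assume st: "0 < s" "0 < t"
    show "b s \<le> (Cp^2 + Cm^2) * max (s/t) (t/s) * b t"
    proof (cases "s \<le> t")
      case True
      have "b s \<le> Cp^2 * (t/s) * b t" using A st True by simp
      also have "\<dots> \<le> (Cp^2 + Cm^2) * max (s/t) (t/s) * b t"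
        using st pos[of t] by (intro mult_right_mono mult_mono) auto
      finally show ?thesis .
    next
      case False
      have "b s \<le> Cm^2 * (s/t) * b t" using B[of t s] st False by simp
      also have "\<dots> \<le> (Cp^2 + Cm^2) * max (s/t) (t/s) * b t"
        using st pos[of t] by (intro mult_right_mono mult_mono) auto
      finally show ?thesis .
    qed
  qed
qed


lemma max_ratio_le:
  fixes s t R :: real
  assumes "0 < s" "0 < t" "s \<le> R * t" "t \<le> R * s" "1 \<le> R"
  shows "max (s/t) (t/s) \<le> R"
proof -
  have "s/t \<le> R" using assms by (simp add: field_simps)
  moreover have "t/s \<le> R" using assms by (simp add: field_simps)
  ultimately show ?thesis by simp
qed

lemma sv_bnd:
  assumes sv: "slowly_varying b" and lim: "(b \<longlongrightarrow> L) (at_right 0)" and L: "0 < L"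
    and M: "0 < M"
  shows "\<exists>m>0. \<exists>U. m \<le> L \<and> L \<le> U \<and> (\<forall>t. 0 < t \<and> t \<le> M \<longrightarrow> m \<le> b t \<and> b t \<le> U)"
proof -
  obtain K where K: "K > 0" "\<And>s t. s > 0 \<Longrightarrow> t > 0 \<Longrightarrow> b s \<le> K * max (s/t) (t/s) * b t"
    using sv_cmp[OF sv] by blast
  have pos: "\<And>t. t > 0 \<Longrightarrow> b t > 0" using sv unfolding slowly_varying_def by auto
  have ev: "eventually (\<lambda>t. L/2 < b t \<and> b t < 2*L) (at_right 0)"
    using order_tendstoD[OF lim, of "L/2"] order_tendstoD[OF lim, of "2*L"] L
    by (auto elim: eventually_elim2)
  then obtain d where d: "d > 0" "\<And>t. 0 < t \<Longrightarrow> t < d \<Longrightarrow> L/2 < b t \<and> b t < 2*L"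
    unfolding eventually_at_right_field by auto
  define s where "s = d/2"
  have s: "0 < s" "s < d" using d by (auto simp: s_def)
  have bs: "L/2 < b s" "b s < 2*L" using d(2)[OF s] by auto
  define R where "R = 2*M/d + 1"
  have R: "R \<ge> 1" using M d by (simp add: R_def)
  define m where "m = min (L/2) (L/(2*K*R))"
  define U where "U = max (2*L) (2*K*R*L)"
  have KR: "K*R > 0" using K R by simp
  have m0: "0 < m" using L KR by (simp add: m_def)
  have mL: "m \<le> L" using L by (simp add: m_def)
  have LU: "L \<le> U" using L by (simp add: U_def)
  have "\<forall>t. 0 < t \<and> t \<le> M \<longrightarrow> m \<le> b t \<and> b t \<le> U"
  proof (intro allI impI)
    fix t assume t: "0 < t \<and> t \<le> M"
    show "m \<le> b t \<and> b t \<le> U"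
    proof (cases "t < d")
      case True
      thus ?thesis using d(2)[of t] t by (auto simp: m_def U_def)
    next
      case False
      have "s \<le> R * t" using R s False t
        by (smt (verit, best) mult_le_cancel_right1)
      moreover have "t \<le> R * s"
      proof -
        have "R * s = M + d/2" using d by (simp add: R_def s_def field_simps)
        thus ?thesis using t d by simp
      qed
      moreover have "0 \<le> max (s/t) (t/s)" "0 \<le> max (t/s) (s/t)" using s t by (simp_all add: le_max_iff_disj)
      ultimately have mx0: "0 \<le> max (s/t) (t/s)" "0 \<le> max (t/s) (s/t)" and mx1: "max (t/s) (s/t) \<le> R" and mx2: "max (s/t) (t/s) \<le> R"
        using max_ratio_le[of s t R] s t R by (auto simp: max.commute)
      have "b t \<le> K * max (t/s) (s/t) * b s" using K(2)[of t s] s t by simp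
      also have "\<dots> \<le> K * R * (2*L)"
        using mx0 mx1 K bs pos[of s] s KR s t
        by (intro mult_mono) (auto intro: order.trans[OF _ max.cobounded1])
      finally have up: "b t \<le> U" by (simp add: U_def)
      have "L/2 \<le> K * max (s/t) (t/s) * b t" using K(2)[of s t] s t bs by simp
      also have "\<dots> \<le> K * R * b t"
        using mx0 mx2 K pos[of t] t KR by (intro mult_mono) auto
      finally have "L/(2*K*R) \<le> b t" using KR by (simp add: field_simps)
      thus ?thesis using up by (simp add: m_def)
    qed
  qed
  thus ?thesis using m0 mL LU by blast
qed


lemma ratio_bounds:
  fixes x y C :: real
  assumes "0 < x" "0 < y" "0 < C" "x \<le> C * y" "y \<le> C * x"
  shows "1 / C \<le> x / y \<and> x / y \<le> C"
  using assms by (auto simp: field_simps)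

lemma part1:
  assumes sv: "slowly_varying b" and lim: "(b \<longlongrightarrow> L) (at_right 0)" and L: "0 < L"
  shows "\<exists>C>0. \<forall>t1\<in>{-t0..t0}. \<forall>t>0.
            1 / C \<le> extend_left b L (t - t1) / b t \<and> extend_left b L (t - t1) / b t \<le> C"
proof -
  define a where "a = \<bar>t0\<bar>"
  have a: "a \<ge> 0" by (simp add: a_def)
  obtain K where K: "K > 0" "\<And>s t. s > 0 \<Longrightarrow> t > 0 \<Longrightarrow> b s \<le> K * max (s/t) (t/s) * b t"
    using sv_cmp[OF sv] by blast
  have pos: "\<And>t. t > 0 \<Longrightarrow> b t > 0" using sv unfolding slowly_varying_def by auto
  obtain m U where mU: "m > 0" "m \<le> L" "L \<le> U" "\<And>t. 0 < t \<Longrightarrow> t \<le> 3*a+1 \<Longrightarrow> m \<le> b t \<and> b t \<le> U"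
    using sv_bnd[OF sv lim L, of "3*a+1"] a by auto
  define C where "C = max (U/m) (2*K)"
  have C: "C > 0" using K by (simp add: C_def)
  have CUm: "U \<le> C * m"
  proof -
    have "U = (U/m) * m" using mU by simp
    also have "\<dots> \<le> C * m" using mU by (intro mult_right_mono) (auto simp: C_def)
    finally show ?thesis .
  qed
  have CK: "2*K \<le> C" by (simp add: C_def)
  have "\<forall>t1\<in>{-t0..t0}. \<forall>t>0.
            1 / C \<le> extend_left b L (t - t1) / b t \<and> extend_left b L (t - t1) / b t \<le> C"
  proof (intro ballI allI impI)
    fix t1 t :: real assume t1: "t1 \<in> {-t0..t0}" and t: "t > 0"
    have t1a: "\<bar>t1\<bar> \<le> a" using t1 by (auto simp: a_def)
    show "1 / C \<le> extend_left b L (t - t1) / b t \<and> extend_left b L (t - t1) / b t \<le> C"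
    proof (cases "t \<ge> 2*a+1")
      case True
      define s where "s = t - t1"
      have s: "s > 0" "t \<le> 2 * s" "s \<le> 2 * t" using True t1a t by (auto simp: s_def)
      have E: "extend_left b L (t - t1) = b s" using s by (simp add: extend_left_def s_def)
      have mx: "max (s/t) (t/s) \<le> 2" "max (t/s) (s/t) \<le> 2"
        using max_ratio_le[of s t 2] max_ratio_le[of t s 2] s t by auto
      have mx0: "0 \<le> max (s/t) (t/s)" "0 \<le> max (t/s) (s/t)" using s t by (simp_all add: le_max_iff_disj)
      have k1: "K * max (s/t) (t/s) \<le> C" using mult_left_mono[OF mx(1), of K] K CK by linarith
      have k2: "K * max (t/s) (s/t) \<le> C" using mult_left_mono[OF mx(2), of K] K CK by linarith
      have "b s \<le> K * max (s/t) (t/s) * b t" using K(2) s t by simp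
      also have "\<dots> \<le> C * b t" using k1 pos[of t] t by (intro mult_right_mono) auto
      finally have 1: "b s \<le> C * b t" .
      have "b t \<le> K * max (t/s) (s/t) * b s" using K(2) s t by simp
      also have "\<dots> \<le> C * b s" using k2 pos[of s] s by (intro mult_right_mono) auto
      finally have 2: "b t \<le> C * b s" .
      show ?thesis unfolding E using ratio_bounds[OF pos[OF s(1)] pos[OF t] C 1 2] .
    next
      case False
      have bt: "m \<le> b t" "b t \<le> U" using mU(4)[of t] t False a by auto
      have e: "m \<le> extend_left b L (t - t1) \<and> extend_left b L (t - t1) \<le> U"
      proof (cases "0 < t - t1")
        case True
        thus ?thesis using mU(4)[of "t - t1"] False t1a by (simp add: extend_left_def)
      next
        case False
        thus ?thesis using mU by (simp add: extend_left_def)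
      qed
      have 1: "extend_left b L (t - t1) \<le> C * b t"
        using e bt CUm C by (smt (verit) mult_left_mono)
      have 2: "b t \<le> C * extend_left b L (t - t1)"
        using e bt CUm C by (smt (verit) mult_left_mono)
      show ?thesis using ratio_bounds[OF _ _ C 1 2] e bt mU(1) by linarith
    qed
  qed
  thus ?thesis using C by blast
qed


lemma approx_transfer:
  fixes S :: "real set"
  assumes C: "C > 0" and bpos: "\<And>t. t \<in> S \<Longrightarrow> b t > 0" and hpos: "\<And>t. t \<in> S \<Longrightarrow> h t > 0"
    and r: "\<And>t. t \<in> S \<Longrightarrow> 1 / C \<le> f t / b t \<and> f t / b t \<le> C"
    and ap: "approx_on S (\<lambda>t. h t * b t) g"
  shows "approx_on S (\<lambda>t. h t * f t) g"
proof -
  obtain D where D: "D \<ge> 1" "\<And>t. t \<in> S \<Longrightarrow> g t / D \<le> h t * b t \<and> h t * b t \<le> D * g t"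
    using ap unfolding approx_on_def by blast
  define E where "E = max 1 C * D"
  have E1: "E \<ge> 1" unfolding E_def
    using mult_mono[OF max.cobounded1[of 1 C] D(1)] by simp
  have "\<forall>t\<in>S. g t / E \<le> h t * f t \<and> h t * f t \<le> E * g t"
  proof
    fix t assume t: "t \<in> S"
    have b: "b t > 0" and h: "h t > 0" using bpos hpos t by auto
    have f1: "b t \<le> C * f t" and f2: "f t \<le> C * b t"
      using r[OF t] b C by (auto simp: field_simps)
    have hb1: "g t \<le> D * (h t * b t)" and hb2: "h t * b t \<le> D * g t"
      using D(2)[OF t] D(1) by (auto simp: field_simps)
    have fp: "f t > 0"
    proof -
      have "0 < C * f t" using f1 b by linarith
      thus ?thesis using C by (simp add: zero_less_mult_iff)
    qed
    have g: "g t > 0" using hb2 h b D(1)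
      by (smt (verit) mult_nonneg_nonpos mult_pos_pos)
    have M1: "C \<le> max 1 C" "1 \<le> max 1 C" by auto
    have "h t * f t \<le> h t * (C * b t)" using f2 h by simp
    also have "\<dots> = C * (h t * b t)" by simp
    also have "\<dots> \<le> C * (D * g t)" using hb2 C by simp
    also have "\<dots> \<le> max 1 C * (D * g t)" using g D(1) by (intro mult_right_mono) auto
    finally have up: "h t * f t \<le> E * g t" by (simp add: E_def)
    have "g t \<le> D * (h t * b t)" by (fact hb1)
    also have "\<dots> \<le> D * (h t * (C * f t))" using f1 h D(1) by simp
    also have "\<dots> = (C * D) * (h t * f t)" by simp
    also have "\<dots> \<le> E * (h t * f t)"
      using f1 h b C D(1) fp unfolding E_def
      by (intro mult_right_mono) (auto intro: mult_nonneg_nonneg simp: zero_le_mult_iff)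
    finally have lo: "g t \<le> E * (h t * f t)" .
    have "g t / E \<le> h t * f t" using lo E1 by (simp add: divide_le_eq mult.commute)
    thus "g t / E \<le> h t * f t \<and> h t * f t \<le> E * g t" using up by simp
  qed
  thus ?thesis unfolding approx_on_def using E1 by blast
qed

lemma part2:
  assumes sv: "slowly_varying b" and lim: "(b \<longlongrightarrow> L) (at_right 0)" and L: "0 < L"
  shows "slowly_varying (\<lambda>t. extend_left b L (t - t1))"
proof -
  let ?f = "\<lambda>t. extend_left b L (t - t1)"
  have bm: "b \<in> borel_measurable (restrict_space lebesgue {0<..})" and bpos: "\<And>t. t > 0 \<Longrightarrow> b t > 0"
    using sv unfolding slowly_varying_def by auto
  have g: "(\<lambda>x. if x \<in> {0<..} then b x else L) \<in> borel_measurable lebesgue"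
    using bm by (subst (asm) measurable_restrict_space_iff[where c = L]) auto
  have "(\<lambda>x. if x \<in> {0<..} then b x else L) \<circ> (\<lambda>t. t - t1) \<in> borel_measurable lebesgue"
    by (rule measurable_comp[OF transl_meas g])
  moreover have "(\<lambda>x. if x \<in> {0<..} then b x else L) \<circ> (\<lambda>t. t - t1) = ?f"
    by (auto simp: extend_left_def fun_eq_iff)
  ultimately have meas: "?f \<in> borel_measurable (restrict_space lebesgue {0<..})"
    by (auto intro: measurable_restrict_space1)
  have fpos: "\<forall>t>0. ?f t > 0" using bpos L by (simp add: extend_left_def)
  obtain C where C: "C > 0" "\<forall>t1'\<in>{-\<bar>t1\<bar>..\<bar>t1\<bar>}. \<forall>t>0.
            1 / C \<le> extend_left b L (t - t1') / b t \<and> extend_left b L (t - t1') / b t \<le> C"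
    using part1[OF sv lim L, of "\<bar>t1\<bar>"] by blast
  have r: "\<And>t. t \<in> {0<..} \<Longrightarrow> 1 / C \<le> ?f t / b t \<and> ?f t / b t \<le> C"
  proof -
    fix t :: real assume "t \<in> {0<..}"
    moreover have "t1 \<in> {-\<bar>t1\<bar>..\<bar>t1\<bar>}"
      using abs_ge_self[of t1] abs_ge_minus_self[of t1] by auto
    ultimately show "1 / C \<le> ?f t / b t \<and> ?f t / b t \<le> C" using C(2) by auto
  qed
  have "(\<exists>bp. mono_on {0<..} bp \<and> approx_on {0<..} (\<lambda>t. t powr \<epsilon> * ?f t) bp) \<and>
        (\<exists>bm. antimono_on {0<..} bm \<and> approx_on {0<..} (\<lambda>t. t powr (-\<epsilon>) * ?f t) bm)"
    if e: "\<epsilon> > 0" for \<epsilon> :: real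
  proof -
    obtain bp bm where bp: "mono_on {0<..} bp" "approx_on {0<..} (\<lambda>t. t powr \<epsilon> * b t) bp"
      and bmm: "antimono_on {0<..} bm" "approx_on {0<..} (\<lambda>t. t powr (-\<epsilon>) * b t) bm"
      using sv e unfolding slowly_varying_def by blast
    have "approx_on {0<..} (\<lambda>t. t powr \<epsilon> * ?f t) bp"
      by (rule approx_transfer[OF C(1) _ _ r bp(2)]) (auto intro: bpos)
    moreover have "approx_on {0<..} (\<lambda>t. t powr (-\<epsilon>) * ?f t) bm"
      by (rule approx_transfer[OF C(1) _ _ r bmm(2)]) (auto intro: bpos)
    ultimately show ?thesis using bp(1) bmm(1) by blast
  qed
  thus ?thesis unfolding slowly_varying_def using meas fpos by blast
qed

theorem lemma3p2:
  fixes b :: "real \<Rightarrow> real" and L :: real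
  assumes "slowly_varying b"
    and "(b \<longlongrightarrow> L) (at_right 0)"
    and "0 < L"
  shows "(\<forall>t0::real. \<exists>C>0. \<forall>t1\<in>{-t0..t0}. \<forall>t>0.
            1 / C \<le> extend_left b L (t - t1) / b t \<and> extend_left b L (t - t1) / b t \<le> C)
       \<and> (\<forall>t1::real. slowly_varying (\<lambda>t. extend_left b L (t - t1)))"
  using part1[OF assms] part2[OF assms] by blast

end
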